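(* Let $A\in\mathbb R^{n\times n}$, $B\in\mathbb R^{n\times m}$, $K\in\mathbb R^{m\times n}$ be as in the context, and let $$\gamma^*_{L0}\;=\;\max_{\alpha\in\mathcal A_0}\ \inf_{P\in\mathbb S^n,\,P\succeq 0}\ \lambda_{\max}\big(A(\alpha)^TP+PA(\alpha)\big)\ \in [-\infty,\infty).$$ Then $K$ is resilient if and only if $\gamma^*_{L0}=-\infty$, and $K$ is not resilient if and only if $\gamma^*_{L0}\ge 0$.
   Context: Fix integers $N\ge 1$ and $n_1,\dots,n_N\ge 1$, $m_1,\dots,m_N\ge 0$, with $n=\sum_i n_i$, $m=\sum_i m_i$. Let $A=[A_{ij}]_{1\le i,j\le N}\in\mathbb R^{n\times n}$ with blocks $A_{ij}\in\mathbb R^{n_i\times n_j}$, $B=\mathrm{diag}(B_1,\dots,B_N)\in\mathbb R^{n\times m}$ with $B_i\in\mathbb R^{n_i\times m_i}$, and $K=[K_{ij}]_{1\le i,j\le N}\in\mathbb R^{m\times n}$ with blocks $K_{ij}\in\mathbb R^{m_i\times n_j}$. For a matrix $\alpha\in\mathbb R^{N\times N}$, write $K\circ\alpha=[\alpha_{ij}K_{ij}]_{1\le i,j\le N}$ (each block scaled by the corresponding scalar entry) and $A(\alpha)=A+B\,(K\circ\alpha)$. The pure attack space is $\mathcal A_0=\{\alpha\in\{0,1\}^{N\times N}:\alpha_{ii}=1 \text{ for all } i\}$. A square matrix is called stable if all its eigenvalues have strictly negative real part. The controller $K$ is called resilient if $A(\alpha)$ is stable for every $\alpha\in\mathcal A_0$,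 and not resilient otherwise (i.e. if $A(\alpha)$ is not stable for some $\alpha\in\mathcal A_0$). $\mathbb S^n$ denotes real symmetric $n\times n$ matrices, $\succeq$ the positive semidefinite order, and $\lambda_{\max}$ the largest eigenvalue of a symmetric matrix. *)

theory Defs
  imports "Jordan_Normal_Form.Char_Poly" "HOL-Library.Extended_Real"
begin

text \<open>Subsystems are indexed 0..N-1 (0-based); block i of the
  state (resp. input) vector has size ns i (resp. ms i) and blocks are contiguous.
  blk s r is the index of the block containing the scalar index r.\<close>

definition blk :: "(nat \<Rightarrow> nat) \<Rightarrow> nat \<Rightarrow> nat" where
  "blk s r = (LEAST i. r < (\<Sum>k\<le>i. s k))"

definition block_diag :: "nat \<Rightarrow> (nat \<Rightarrow> nat) \<Rightarrow> (nat \<Rightarrow> nat) \<Rightarrow> real mat \<Rightarrow> bool" where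
  "block_diag N ns ms B =
     (B \<in> carrier_mat (\<Sum>i<N. ns i) (\<Sum>i<N. ms i) \<and>
      (\<forall>r c. r < dim_row B \<longrightarrow> c < dim_col B \<longrightarrow> blk ns r \<noteq> blk ms c \<longrightarrow> B $$ (r, c) = 0))"

definition blk_scale :: "(nat \<Rightarrow> nat) \<Rightarrow> (nat \<Rightarrow> nat) \<Rightarrow> real mat \<Rightarrow> real mat \<Rightarrow> real mat" where
  "blk_scale ns ms K \<alpha> =
     mat (dim_row K) (dim_col K) (\<lambda>(r, c). \<alpha> $$ (blk ms r, blk ns c) * K $$ (r, c))"

definition A_alpha :: "(nat \<Rightarrow> nat) \<Rightarrow> (nat \<Rightarrow> nat) \<Rightarrow> real mat \<Rightarrow> real mat \<Rightarrow> real mat \<Rightarrow> real mat \<Rightarrow> real mat" where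
  "A_alpha ns ms A B K \<alpha> = A + B * blk_scale ns ms K \<alpha>"

definition attack_space :: "nat \<Rightarrow> real mat set" where
  "attack_space N = {\<alpha> \<in> carrier_mat N N.
      (\<forall>i j. i < N \<longrightarrow> j < N \<longrightarrow> \<alpha> $$ (i, j) = 0 \<or> \<alpha> $$ (i, j) = 1) \<and>
      (\<forall>i < N. \<alpha> $$ (i, i) = 1)}"

definition stable :: "real mat \<Rightarrow> bool" where
  "stable M = (\<forall>k. eigenvalue (map_mat complex_of_real M) k \<longrightarrow> Re k < 0)"

definition resilient :: "nat \<Rightarrow> (nat \<Rightarrow> nat) \<Rightarrow> (nat \<Rightarrow> nat) \<Rightarrow> real mat \<Rightarrow> real mat \<Rightarrow> real mat \<Rightarrow> bool" where
  "resilient N ns ms A B K = (\<forall>\<alpha> \<in> attack_space N. stable (A_alpha ns ms A B K \<alpha>))"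

definition psd_set :: "nat \<Rightarrow> real mat set" where
  "psd_set n = {P \<in> carrier_mat n n. transpose_mat P = P \<and>
                  (\<forall>x \<in> carrier_vec n. 0 \<le> x \<bullet> (P *\<^sub>v x))}"

text \<open>Largest eigenvalue of a real symmetric matrix (all its eigenvalues are real).\<close>
definition lambda_max :: "real mat \<Rightarrow> real" where
  "lambda_max M = Max {k. eigenvalue M k}"

definition gamma_L0 :: "nat \<Rightarrow> (nat \<Rightarrow> nat) \<Rightarrow> (nat \<Rightarrow> nat) \<Rightarrow> real mat \<Rightarrow> real mat \<Rightarrow> real mat \<Rightarrow> ereal" where
  "gamma_L0 N ns ms A B K =
     Max ((\<lambda>\<alpha>. INF P \<in> psd_set (\<Sum>i<N. ns i).
              ereal (lambda_max (transpose_mat (A_alpha ns ms A B K \<alpha>) * P + P * A_alpha ns ms A B K \<alpha>)))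
          ` attack_space N)"

end

theory Submission
  imports Defs "Jordan_Normal_Form.Schur_Decomposition"
begin

definition ipf :: "nat \<Rightarrow> (nat\<Rightarrow>real) \<Rightarrow> (nat\<Rightarrow>real) \<Rightarrow> real" where
  "ipf n f g = (\<Sum>i<n. f i * g i)"
definition mvf :: "nat \<Rightarrow> (nat \<Rightarrow> nat \<Rightarrow> real) \<Rightarrow> (nat\<Rightarrow>real) \<Rightarrow> nat \<Rightarrow> real" where
  "mvf n Q f = (\<lambda>i. \<Sum>j<n. Q i j * f j)"
definition qff :: "nat \<Rightarrow> (nat \<Rightarrow> nat \<Rightarrow> real) \<Rightarrow> (nat\<Rightarrow>real) \<Rightarrow> real" where
  "qff n Q f = ipf n f (mvf n Q f)"

lemma ipf_nonneg: "0 \<le> ipf n f f"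
  unfolding ipf_def by (auto intro: sum_nonneg)

lemma ipf_zero: "ipf n f f = 0 \<Longrightarrow> i < n \<Longrightarrow> f i = 0"
  unfolding ipf_def by (subst (asm) sum_nonneg_eq_0_iff) auto

lemma ipf_comm: "ipf n f g = ipf n g f"
  unfolding ipf_def by (simp add: mult.commute)

lemma ipf_lin: "ipf n (\<lambda>i. f i + s * g i) h = ipf n f h + s * ipf n g h"
  unfolding ipf_def by (simp add: algebra_simps sum.distrib sum_distrib_left)

lemma ipf_lin2: "ipf n h (\<lambda>i. f i + s * g i) = ipf n h f + s * ipf n h g"
  unfolding ipf_def by (simp add: algebra_simps sum.distrib sum_distrib_left)

lemma ipf_scale: "ipf n (\<lambda>i. c * f i) g = c * ipf n f g"
  unfolding ipf_def by (simp add: algebra_simps sum_distrib_left)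

lemma ipf_scale2: "ipf n g (\<lambda>i. c * f i) = c * ipf n g f"
  unfolding ipf_def by (simp add: algebra_simps sum_distrib_left)

lemma mvf_lin: "mvf n Q (\<lambda>i. f i + s * g i) = (\<lambda>i. mvf n Q f i + s * mvf n Q g i)"
  unfolding mvf_def by (simp add: algebra_simps sum.distrib sum_distrib_left)

lemma mvf_scale: "mvf n Q (\<lambda>i. c * f i) = (\<lambda>i. c * mvf n Q f i)"
  unfolding mvf_def by (simp add: algebra_simps sum_distrib_left)

lemma ipf_mvf_sym:
  assumes "\<forall>i<n. \<forall>j<n. Q i j = Q j i"
  shows "ipf n f (mvf n Q g) = ipf n g (mvf n Q f)"
proof -
  have "ipf n f (mvf n Q g) = (\<Sum>i<n. \<Sum>j<n. f i * Q i j * g j)"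
    unfolding ipf_def mvf_def by (simp add: sum_distrib_left mult.assoc)
  also have "\<dots> = (\<Sum>j<n. \<Sum>i<n. f i * Q i j * g j)" by (rule sum.swap)
  also have "\<dots> = (\<Sum>j<n. \<Sum>i<n. g j * Q j i * f i)"
    using assms by (intro sum.cong refl) (auto simp: mult.commute)
  also have "\<dots> = ipf n g (mvf n Q f)"
    unfolding ipf_def mvf_def by (simp add: sum_distrib_left mult.assoc)
  finally show ?thesis .
qed

lemma qff_scale: "qff n Q (\<lambda>i. c * f i) = c^2 * qff n Q f"
  unfolding qff_def mvf_scale ipf_scale ipf_comm[of n f]
  by (simp add: ipf_scale power2_eq_square ipf_comm)

lemma ipf_coord_le:
  assumes "ipf n f f = 1" "i < n" shows "\<bar>f i\<bar> \<le> 1"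
proof -
  have "f i * f i \<le> ipf n f f" unfolding ipf_def
    using assms(2) by (intro member_le_sum) auto
  then have "f i ^ 2 \<le> 1 ^ 2" using assms by (simp add: power2_eq_square)
  then show ?thesis using abs_le_square_iff[of "f i" 1] by simp
qed

lemma qff_bound:
  assumes "ipf n f f = 1"
  shows "qff n Q f \<le> (\<Sum>i<n. \<Sum>j<n. \<bar>Q i j\<bar>)"
proof -
  have "qff n Q f = (\<Sum>i<n. \<Sum>j<n. f i * Q i j * f j)"
    unfolding qff_def ipf_def mvf_def by (simp add: sum_distrib_left mult.assoc)
  also have "\<dots> \<le> (\<Sum>i<n. \<Sum>j<n. \<bar>Q i j\<bar>)"
  proof (intro sum_mono)
    fix i j assume i: "i \<in> {..<n}" and j: "j \<in> {..<n}"
    have "f i * Q i j * f j \<le> \<bar>f i * Q i j * f j\<bar>" by (rule abs_ge_self)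
    also have "\<dots> = \<bar>f i\<bar> * \<bar>Q i j\<bar> * \<bar>f j\<bar>" by (simp only: abs_mult)
    also have "\<dots> \<le> \<bar>Q i j\<bar>"
    proof -
      have a: "\<bar>f i\<bar> \<le> 1" "\<bar>f j\<bar> \<le> 1" using ipf_coord_le[OF assms] i j by auto
      have "\<bar>f i\<bar> * \<bar>Q i j\<bar> \<le> \<bar>Q i j\<bar>"
        using a(1) by (intro mult_left_le_one_le) auto
      moreover have "\<bar>f i\<bar> * \<bar>Q i j\<bar> * \<bar>f j\<bar> \<le> \<bar>f i\<bar> * \<bar>Q i j\<bar>"
        using a(2) by (intro mult_right_le_one_le) auto
      ultimately show ?thesis by linarith
    qed
    finally show "f i * Q i j * f j \<le> \<bar>Q i j\<bar>" .
  qed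
  finally show ?thesis .
qed

lemma subseq_conv:
  fixes x :: "nat \<Rightarrow> nat \<Rightarrow> real" and m :: nat
  shows "(\<And>k i. i < m \<Longrightarrow> \<bar>x k i\<bar> \<le> B) \<Longrightarrow>
    \<exists>r. strict_mono r \<and> (\<forall>i<m. convergent (\<lambda>k. x (r k) i))"
proof (induction m)
  case 0
  show ?case using strict_mono_id by blast
next
  case (Suc m)
  have "\<exists>r. strict_mono r \<and> (\<forall>i<m. convergent (\<lambda>k. x (r k) i))"
    using Suc.prems by (intro Suc.IH) simp
  then obtain r where r: "strict_mono r" "\<forall>i<m. convergent (\<lambda>k. x (r k) i)" by blast
  obtain g where g: "strict_mono g" "monoseq (\<lambda>k. x (r (g k)) m)"
    using seq_monosub[of "\<lambda>k. x (r k) m"] by blast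
  have "\<And>k. norm (x (r (g k)) m) \<le> B"
    using Suc.prems[of m] by simp
  then have "Bseq (\<lambda>k. x (r (g k)) m)"
    by (rule BseqI')
  then have cm: "convergent (\<lambda>k. x (r (g k)) m)"
    using g(2) by (rule Bseq_monoseq_convergent)
  have "convergent (\<lambda>k. x (r (g k)) i)" if "i < Suc m" for i
  proof (cases "i = m")
    case True then show ?thesis using cm by simp
  next
    case False
    with that have "i < m" by simp
    with r obtain L where "(\<lambda>k. x (r k) i) \<longlonglongrightarrow> L"
      unfolding convergent_def by blast
    from LIMSEQ_subseq_LIMSEQ[OF this g(1)] have "(\<lambda>k. x (r (g k)) i) \<longlonglongrightarrow> L"
      by (simp add: o_def)
    then show ?thesis by (rule convergentI)
  qed
  moreover have "strict_mono (r \<circ> g)" using r g strict_mono_o by blast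
  ultimately show ?case unfolding o_def by blast
qed

lemma qff_sum: "qff n Q f = (\<Sum>i<n. \<Sum>j<n. f i * Q i j * f j)"
  unfolding qff_def ipf_def mvf_def by (simp add: sum_distrib_left mult.assoc)

lemma qff_zero: "ipf n y y = 0 \<Longrightarrow> qff n Q y = 0"
  unfolding qff_sum using ipf_zero[of n y] by (intro sum.neutral) auto

lemma rayleigh:
  assumes sym: "\<forall>i<n. \<forall>j<n. Q i j = Q j i" and n: "0 < n"
  shows "\<exists>x \<mu>. ipf n x x = 1 \<and> (\<forall>i<n. mvf n Q x i = \<mu> * x i) \<and> (\<forall>y. qff n Q y \<le> \<mu> * ipf n y y)"
proof -
  define U where "U = {f. ipf n f f = 1}"
  define C where "C = (\<Sum>i<n. \<Sum>j<n. \<bar>Q i j\<bar>)"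
  define \<mu> where "\<mu> = Sup (qff n Q ` U)"
  have "ipf n (\<lambda>i. if i = 0 then 1 else 0) (\<lambda>i. if i = 0 then 1 else 0) = 1"
    unfolding ipf_def using n by (simp add: if_distrib sum.delta' cong: if_cong)
  then have ne: "qff n Q ` U \<noteq> {}" unfolding U_def by blast
  have bdd: "bdd_above (qff n Q ` U)"
    unfolding bdd_above_def U_def using qff_bound[of n _ Q] by blast
  have le: "qff n Q f \<le> \<mu>" if "f \<in> U" for f
    unfolding \<mu>_def using bdd that by (intro cSup_upper) auto
  have "\<forall>k. \<exists>f\<in>U. \<mu> - inverse (real (Suc k)) < qff n Q f"
  proof
    fix k
    have "\<mu> - inverse (real (Suc k)) < \<mu>" by simp
    then show "\<exists>f\<in>U. \<mu> - inverse (real (Suc k)) < qff n Q f"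
      unfolding \<mu>_def using less_cSup_iff[OF ne bdd] by blast
  qed
  then obtain xs where xs: "\<And>k. xs k \<in> U" "\<And>k. \<mu> - inverse (real (Suc k)) < qff n Q (xs k)"
    by metis
  have "\<And>k i. i < n \<Longrightarrow> \<bar>xs k i\<bar> \<le> 1"
    using xs(1) ipf_coord_le unfolding U_def by blast
  from subseq_conv[of n xs, OF this] obtain r where
    r: "strict_mono r" "\<forall>i<n. convergent (\<lambda>k. xs (r k) i)" by blast
  define l where "l i = lim (\<lambda>k. xs (r k) i)" for i
  have conv: "(\<lambda>k. xs (r k) i) \<longlonglongrightarrow> l i" if "i < n" for i
    unfolding l_def using r(2) that convergent_LIMSEQ_iff by blast
  have "(\<lambda>k. ipf n (xs (r k)) (xs (r k))) \<longlonglongrightarrow> ipf n l l"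
    unfolding ipf_def by (intro tendsto_sum tendsto_mult conv) auto
  moreover have "(\<lambda>k. ipf n (xs (r k)) (xs (r k))) = (\<lambda>k. 1)"
    using xs(1) unfolding U_def by auto
  ultimately have l1: "ipf n l l = 1"
    using LIMSEQ_unique tendsto_const by metis
  have qc: "(\<lambda>k. qff n Q (xs (r k))) \<longlonglongrightarrow> qff n Q l"
    unfolding qff_sum by (intro tendsto_sum tendsto_mult conv tendsto_const) auto
  have "(\<lambda>k. inverse (real (Suc (r k)))) \<longlonglongrightarrow> 0"
    using LIMSEQ_subseq_LIMSEQ[OF LIMSEQ_inverse_real_of_nat r(1)] by (simp add: o_def)
  then have lo: "(\<lambda>k. \<mu> - inverse (real (Suc (r k)))) \<longlonglongrightarrow> \<mu>"
    using tendsto_diff[OF tendsto_const] by fastforce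
  have "(\<lambda>k. qff n Q (xs (r k))) \<longlonglongrightarrow> \<mu>"
  proof (rule tendsto_sandwich[OF _ _ lo tendsto_const])
    show "\<forall>\<^sub>F k in sequentially. \<mu> - inverse (real (Suc (r k))) \<le> qff n Q (xs (r k))"
      using xs(2) less_imp_le by (intro always_eventually) blast
    show "\<forall>\<^sub>F k in sequentially. qff n Q (xs (r k)) \<le> \<mu>"
      using xs(1) le by (intro always_eventually) blast
  qed
  with qc have ql: "qff n Q l = \<mu>" using LIMSEQ_unique by blast
  have hom: "qff n Q y \<le> \<mu> * ipf n y y" for y
  proof (cases "ipf n y y = 0")
    case True
    then show ?thesis using qff_zero by simp
  next
    case False
    define p where "p = ipf n y y"
    have p: "p > 0" using False ipf_nonneg[of n y] unfolding p_def by linarith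
    define c where "c = 1 / sqrt p"
    have c2: "c^2 = 1 / p" unfolding c_def using p by (simp add: power_divide)
    have "ipf n (\<lambda>i. c * y i) (\<lambda>i. c * y i) = c^2 * p"
      unfolding p_def by (simp add: ipf_scale ipf_scale2 power2_eq_square)
    also have "\<dots> = 1" using c2 p by simp
    finally have "(\<lambda>i. c * y i) \<in> U" unfolding U_def by simp
    then have "c^2 * qff n Q y \<le> \<mu>" using le qff_scale by metis
    then have "qff n Q y / p \<le> \<mu>" using c2 by simp
    then show ?thesis using p unfolding p_def[symmetric] by (simp add: divide_le_eq mult.commute)
  qed
  define z where "z i = mvf n Q l i - \<mu> * l i" for i
  define g where "g = ipf n z z"
  define h where "h = qff n Q z - \<mu> * ipf n z z"
  have zz: "ipf n z (mvf n Q l) - \<mu> * ipf n z l = g"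
  proof -
    have "z = (\<lambda>i. mvf n Q l i + (- \<mu>) * l i)" unfolding z_def by auto
    then have "ipf n z z = ipf n z (mvf n Q l) + (-\<mu>) * ipf n z l"
      by (metis ipf_lin2)
    then show ?thesis unfolding g_def by simp
  qed
  have key: "2 * s * g + s^2 * h \<le> 0" for s
  proof -
    have e1: "qff n Q (\<lambda>i. l i + s * z i) = qff n Q l + 2 * s * ipf n z (mvf n Q l) + s^2 * qff n Q z"
      unfolding qff_def mvf_lin ipf_lin ipf_lin2 using ipf_mvf_sym[OF sym, of l z]
      by (simp add: algebra_simps power2_eq_square)
    have e2: "ipf n (\<lambda>i. l i + s * z i) (\<lambda>i. l i + s * z i) = 1 + 2 * s * ipf n z l + s^2 * ipf n z z"
      unfolding ipf_lin ipf_lin2 using l1 ipf_comm[of n l z]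
      by (simp add: algebra_simps power2_eq_square)
    from hom[of "\<lambda>i. l i + s * z i"] e1 e2 ql
    have "\<mu> + 2 * s * ipf n z (mvf n Q l) + s^2 * qff n Q z \<le> \<mu> * (1 + 2 * s * ipf n z l + s^2 * ipf n z z)"
      by simp
    then show ?thesis using zz unfolding h_def by (simp add: algebra_simps)
  qed
  have g0: "g = 0"
  proof (rule ccontr)
    assume "g \<noteq> 0"
    then have gp: "g > 0" using ipf_nonneg[of n z] unfolding g_def by linarith
    define s where "s = g / (\<bar>h\<bar> + 1)"
    have sp: "s > 0" using gp unfolding s_def by (simp add: add_pos_nonneg)
    have "2 * s * g \<le> - (s^2 * h)" using key[of s] by linarith
    also have "\<dots> \<le> s^2 * \<bar>h\<bar>" by (simp add: abs_if)
    finally have "2 * s * g \<le> s * (s * \<bar>h\<bar>)" by (simp add: power2_eq_square)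
    then have "2 * g \<le> s * \<bar>h\<bar>" using sp by simp
    moreover have "s * \<bar>h\<bar> < g"
    proof -
      have "s * \<bar>h\<bar> = g * (\<bar>h\<bar> / (\<bar>h\<bar> + 1))" unfolding s_def by simp
      also have "\<dots> < g * 1" using gp by (intro mult_strict_left_mono) auto
      finally show ?thesis by simp
    qed
    ultimately show False using gp by linarith
  qed
  have "\<forall>i<n. mvf n Q l i = \<mu> * l i"
    using ipf_zero[of n z] g0 unfolding g_def z_def by auto
  then show ?thesis using l1 hom by blast
qed

lemma mult_mat_entry:
  assumes "A \<in> carrier_mat n m" "B \<in> carrier_mat m p" "i < n" "j < p"
  shows "(A * B) $$ (i,j) = (\<Sum>k<m. A $$ (i,k) * B $$ (k,j))"
  using assms by (simp add: scalar_prod_def lessThan_atLeast0)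

lemma mult_mat_vec_entry:
  assumes "A \<in> carrier_mat n m" "v \<in> carrier_vec m" "i < n"
  shows "(A *\<^sub>v v) $ i = (\<Sum>k<m. A $$ (i,k) * v $ k)"
  using assms by (simp add: scalar_prod_def lessThan_atLeast0)

abbreviation mf :: "'a mat \<Rightarrow> nat \<Rightarrow> nat \<Rightarrow> 'a" where
  "mf A \<equiv> (\<lambda>i j. A $$ (i,j))"

lemma ipf_cong: "(\<And>i. i < n \<Longrightarrow> f i = f' i) \<Longrightarrow> (\<And>i. i < n \<Longrightarrow> g i = g' i) \<Longrightarrow> ipf n f g = ipf n f' g'"
  unfolding ipf_def by (intro sum.cong) auto

lemma mvf_cong: "(\<And>i. i < n \<Longrightarrow> f i = f' i) \<Longrightarrow> mvf n Q f = mvf n Q f'"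
  unfolding mvf_def by (intro ext sum.cong) auto

lemma qff_cong: "(\<And>i. i < n \<Longrightarrow> f i = f' i) \<Longrightarrow> qff n Q f = qff n Q f'"
  unfolding qff_def using mvf_cong[of n f f' Q] by (intro ipf_cong) auto

lemma quad_vec:
  assumes "P \<in> carrier_mat n n" "x \<in> carrier_vec n"
  shows "x \<bullet> (P *\<^sub>v x) = qff n (mf P) (\<lambda>i. x $ i)"
  using assms unfolding qff_def ipf_def mvf_def
  by (simp add: scalar_prod_def lessThan_atLeast0 mult_mat_vec_entry)

lemma sym_transpose:
  assumes "P \<in> carrier_mat n n"
  shows "transpose_mat P = P \<longleftrightarrow> (\<forall>i<n. \<forall>j<n. P $$ (i,j) = P $$ (j,i))"
proof
  assume "transpose_mat P = P"
  then show "\<forall>i<n. \<forall>j<n. P $$ (i,j) = P $$ (j,i)"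
    using assms by (metis carrier_matD index_transpose_mat(1))
next
  assume "\<forall>i<n. \<forall>j<n. P $$ (i,j) = P $$ (j,i)"
  then show "transpose_mat P = P" using assms by (intro eq_matI) auto
qed

lemma psd_set_iff:
  "P \<in> psd_set n \<longleftrightarrow> P \<in> carrier_mat n n \<and> (\<forall>i<n. \<forall>j<n. P $$ (i,j) = P $$ (j,i)) \<and>
     (\<forall>f. 0 \<le> qff n (mf P) f)"
proof
  assume P: "P \<in> psd_set n"
  then have c: "P \<in> carrier_mat n n" unfolding psd_set_def by auto
  moreover have "\<forall>i<n. \<forall>j<n. P $$ (i,j) = P $$ (j,i)"
    using P c sym_transpose unfolding psd_set_def by auto
  moreover have "0 \<le> qff n (mf P) f" for f
  proof -
    have "0 \<le> vec n f \<bullet> (P *\<^sub>v vec n f)" using P unfolding psd_set_def by auto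
    also have "\<dots> = qff n (mf P) (\<lambda>i. vec n f $ i)" using quad_vec[OF c] by auto
    also have "\<dots> = qff n (mf P) f" by (intro qff_cong) auto
    finally show ?thesis .
  qed
  ultimately show "P \<in> carrier_mat n n \<and> (\<forall>i<n. \<forall>j<n. P $$ (i,j) = P $$ (j,i)) \<and> (\<forall>f. 0 \<le> qff n (mf P) f)"
    by blast
next
  assume "P \<in> carrier_mat n n \<and> (\<forall>i<n. \<forall>j<n. P $$ (i,j) = P $$ (j,i)) \<and> (\<forall>f. 0 \<le> qff n (mf P) f)"
  then show "P \<in> psd_set n" unfolding psd_set_def using quad_vec sym_transpose by auto
qed

lemma lmax:
  assumes Q: "Q \<in> carrier_mat n n" and sym: "\<forall>i<n. \<forall>j<n. Q $$ (i,j) = Q $$ (j,i)" and n: "0 < n"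
  shows "\<exists>\<mu>. lambda_max Q = \<mu> \<and> (\<forall>y. qff n (mf Q) y \<le> \<mu> * ipf n y y) \<and>
     (\<exists>x. ipf n x x = 1 \<and> qff n (mf Q) x = \<mu>)"
proof -
  obtain x \<mu> where x: "ipf n x x = 1" "\<forall>i<n. mvf n (mf Q) x i = \<mu> * x i"
    and hom: "\<forall>y. qff n (mf Q) y \<le> \<mu> * ipf n y y"
    using rayleigh[of n "mf Q", OF _ n] sym by blast
  have qx: "qff n (mf Q) x = \<mu>"
  proof -
    have "qff n (mf Q) x = ipf n x (\<lambda>i. \<mu> * x i)"
      unfolding qff_def using x(2) by (intro ipf_cong) auto
    then show ?thesis using x(1) by (simp add: ipf_scale2)
  qed
  have ev: "eigenvalue Q \<mu>"
  proof -
    have "vec n x \<noteq> 0\<^sub>v n"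
    proof
      assume "vec n x = 0\<^sub>v n"
      then have "\<forall>i<n. x i = 0" by (metis index_vec index_zero_vec(1))
      then have "ipf n x x = 0" unfolding ipf_def by simp
      with x(1) show False by simp
    qed
    moreover have "Q *\<^sub>v vec n x = \<mu> \<cdot>\<^sub>v vec n x"
    proof (rule eq_vecI)
      fix i assume "i < dim_vec (\<mu> \<cdot>\<^sub>v vec n x)"
      then have i: "i < n" by simp
      have "(Q *\<^sub>v vec n x) $ i = (\<Sum>k<n. Q $$ (i,k) * x k)"
        using mult_mat_vec_entry[OF Q _ i, of "vec n x"] by simp
      also have "\<dots> = \<mu> * x i" using x(2) i unfolding mvf_def by simp
      finally show "(Q *\<^sub>v vec n x) $ i = (\<mu> \<cdot>\<^sub>v vec n x) $ i" using i by simp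
    qed (use Q in auto)
    ultimately show ?thesis unfolding eigenvalue_def eigenvector_def using Q
      by (intro exI[of _ "vec n x"]) auto
  qed
  have le: "k \<le> \<mu>" if ek: "eigenvalue Q k" for k
  proof -
    obtain v where v: "v \<in> carrier_vec n" "v \<noteq> 0\<^sub>v n" "Q *\<^sub>v v = k \<cdot>\<^sub>v v"
      using ek Q unfolding eigenvalue_def eigenvector_def by auto
    define f where "f i = v $ i" for i
    have "qff n (mf Q) f = ipf n f (\<lambda>i. k * f i)"
      unfolding qff_def
    proof (intro ipf_cong)
      fix i assume i: "i < n"
      have "mvf n (mf Q) f i = (Q *\<^sub>v v) $ i"
        using mult_mat_vec_entry[OF Q v(1) i] unfolding mvf_def f_def by simp
      also have "\<dots> = k * f i" using v(3) i v(1) unfolding f_def by simp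
      finally show "mvf n (mf Q) f i = k * f i" .
    qed auto
    then have qf: "qff n (mf Q) f = k * ipf n f f" by (simp add: ipf_scale2)
    have "ipf n f f \<noteq> 0"
    proof
      assume "ipf n f f = 0"
      then have "\<forall>i<n. v $ i = 0" using ipf_zero unfolding f_def by blast
      then have "v = 0\<^sub>v n" using v(1) by (intro eq_vecI) auto
      with v(2) show False by simp
    qed
    then have pos: "ipf n f f > 0" using ipf_nonneg[of n f] by linarith
    have "k * ipf n f f \<le> \<mu> * ipf n f f" using hom qf by metis
    then show ?thesis using pos by simp
  qed
  have fin: "finite {k. eigenvalue Q k}"
  proof -
    have "char_poly Q \<noteq> 0" using degree_monic_char_poly[OF Q] by auto
    then have "finite {k. poly (char_poly Q) k = 0}" by (rule poly_roots_finite)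
    then show ?thesis using eigenvalue_root_char_poly[OF Q] by simp
  qed
  have "lambda_max Q = \<mu>" unfolding lambda_max_def
    using fin ev le by (intro Max_eqI) auto
  then show ?thesis using hom x(1) qx by blast
qed

lemma triple:
  fixes A B :: "nat \<Rightarrow> nat \<Rightarrow> real"
  shows "(\<Sum>i<n. \<Sum>j<n. y i * (\<Sum>k<n. A k i * B k j) * y j) = ipf n (mvf n A y) (mvf n B y)"
proof -
  have "(\<Sum>i<n. \<Sum>j<n. y i * (\<Sum>k<n. A k i * B k j) * y j) =
        (\<Sum>i<n. \<Sum>j<n. \<Sum>k<n. (A k i * y i) * (B k j * y j))"
    by (simp add: sum_distrib_left sum_distrib_right mult_ac)
  also have "\<dots> = (\<Sum>i<n. \<Sum>k<n. \<Sum>j<n. (A k i * y i) * (B k j * y j))"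
    by (intro sum.cong refl sum.swap)
  also have "\<dots> = (\<Sum>k<n. \<Sum>i<n. \<Sum>j<n. (A k i * y i) * (B k j * y j))"
    by (rule sum.swap)
  also have "\<dots> = (\<Sum>k<n. (\<Sum>i<n. A k i * y i) * (\<Sum>j<n. B k j * y j))"
    by (simp add: sum_product)
  also have "\<dots> = ipf n (mvf n A y) (mvf n B y)"
    unfolding ipf_def mvf_def by simp
  finally show ?thesis .
qed

lemma lyap_mat:
  fixes M P :: "real mat"
  assumes M: "M \<in> carrier_mat n n" and P: "P \<in> carrier_mat n n"
    and sym: "\<forall>i<n. \<forall>j<n. P $$ (i,j) = P $$ (j,i)"
  defines "Q \<equiv> transpose_mat M * P + P * M"
  shows "Q \<in> carrier_mat n n" "\<forall>i<n. \<forall>j<n. Q $$ (i,j) = Q $$ (j,i)"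
    "qff n (mf Q) y = 2 * ipf n (mvf n (mf M) y) (mvf n (mf P) y)"
proof -
  have MT: "transpose_mat M \<in> carrier_mat n n" using M by simp
  show Qc: "Q \<in> carrier_mat n n" unfolding Q_def using M P by simp
  have ent: "Q $$ (i,j) = (\<Sum>k<n. M $$ (k,i) * P $$ (k,j)) + (\<Sum>k<n. P $$ (i,k) * M $$ (k,j))"
    if "i < n" "j < n" for i j
  proof -
    have "Q $$ (i,j) = (transpose_mat M * P) $$ (i,j) + (P * M) $$ (i,j)"
      unfolding Q_def using that M P by simp
    also have "\<dots> = (\<Sum>k<n. transpose_mat M $$ (i,k) * P $$ (k,j)) + (\<Sum>k<n. P $$ (i,k) * M $$ (k,j))"
      using mult_mat_entry[OF MT P that] mult_mat_entry[OF P M that] by simp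
    also have "(\<Sum>k<n. transpose_mat M $$ (i,k) * P $$ (k,j)) = (\<Sum>k<n. M $$ (k,i) * P $$ (k,j))"
      using M that by (intro sum.cong) auto
    finally show ?thesis .
  qed
  show "\<forall>i<n. \<forall>j<n. Q $$ (i,j) = Q $$ (j,i)"
  proof (intro allI impI)
    fix i j assume ij: "i < n" "j < n"
    have "(\<Sum>k<n. P $$ (i,k) * M $$ (k,j)) = (\<Sum>k<n. M $$ (k,j) * P $$ (k,i))"
      using sym ij by (intro sum.cong) (auto simp: mult.commute)
    moreover have "(\<Sum>k<n. M $$ (k,i) * P $$ (k,j)) = (\<Sum>k<n. P $$ (j,k) * M $$ (k,i))"
      using sym ij by (intro sum.cong) (auto simp: mult.commute)
    ultimately show "Q $$ (i,j) = Q $$ (j,i)" using ent ij by simp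
  qed
  have "qff n (mf Q) y = (\<Sum>i<n. \<Sum>j<n. y i * Q $$ (i,j) * y j)" by (rule qff_sum)
  also have "\<dots> = (\<Sum>i<n. \<Sum>j<n. y i * (\<Sum>k<n. M $$ (k,i) * P $$ (k,j)) * y j) +
                   (\<Sum>i<n. \<Sum>j<n. y i * (\<Sum>k<n. P $$ (k,i) * M $$ (k,j)) * y j)"
  proof -
    have "(\<Sum>i<n. \<Sum>j<n. y i * Q $$ (i,j) * y j) =
      (\<Sum>i<n. \<Sum>j<n. y i * (\<Sum>k<n. M $$ (k,i) * P $$ (k,j)) * y j + y i * (\<Sum>k<n. P $$ (k,i) * M $$ (k,j)) * y j)"
    proof (intro sum.cong refl)
      fix i j assume "i \<in> {..<n}" "j \<in> {..<n}"
      then have ij: "i < n" "j < n" by auto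
      have "(\<Sum>k<n. P $$ (i,k) * M $$ (k,j)) = (\<Sum>k<n. P $$ (k,i) * M $$ (k,j))"
        using sym ij by (intro sum.cong) auto
      then show "y i * Q $$ (i,j) * y j = y i * (\<Sum>k<n. M $$ (k,i) * P $$ (k,j)) * y j + y i * (\<Sum>k<n. P $$ (k,i) * M $$ (k,j)) * y j"
        using ent[OF ij] by (simp add: algebra_simps)
    qed
    then show ?thesis by (simp add: sum.distrib)
  qed
  also have "\<dots> = ipf n (mvf n (mf M) y) (mvf n (mf P) y) + ipf n (mvf n (mf P) y) (mvf n (mf M) y)"
    using triple[of y "mf M" "mf P" n] triple[of y "mf P" "mf M" n] by simp
  also have "\<dots> = 2 * ipf n (mvf n (mf M) y) (mvf n (mf P) y)"
    using ipf_comm[of n "mvf n (mf P) y" "mvf n (mf M) y"] by simp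
  finally show "qff n (mf Q) y = 2 * ipf n (mvf n (mf M) y) (mvf n (mf P) y)" .
qed

lemma unstable_ge0:
  fixes M P :: "real mat"
  assumes M: "M \<in> carrier_mat n n" and n: "0 < n" and ns: "\<not> stable M" and P: "P \<in> psd_set n"
  shows "lambda_max (transpose_mat M * P + P * M) \<ge> 0"
proof -
  define Q where "Q = transpose_mat M * P + P * M"
  from P have Pc: "P \<in> carrier_mat n n" and sym: "\<forall>i<n. \<forall>j<n. P $$ (i,j) = P $$ (j,i)"
    and psd: "\<And>f. 0 \<le> qff n (mf P) f" unfolding psd_set_iff by auto
  note LM = lyap_mat[OF M Pc sym, folded Q_def]
  obtain \<mu> where mu: "lambda_max Q = \<mu>" "\<forall>y. qff n (mf Q) y \<le> \<mu> * ipf n y y"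
    using lmax[OF LM(1) LM(2) n] by blast
  define Mc where "Mc = map_mat complex_of_real M"
  have Mc: "Mc \<in> carrier_mat n n" using M unfolding Mc_def by simp
  obtain k where k: "eigenvalue Mc k" "\<not> Re k < 0" using ns unfolding stable_def Mc_def by blast
  obtain v where v: "v \<in> carrier_vec n" "v \<noteq> 0\<^sub>v n" "Mc *\<^sub>v v = k \<cdot>\<^sub>v v"
    using k(1) Mc unfolding eigenvalue_def eigenvector_def by auto
  define a where "a i = Re (v $ i)" for i
  define b where "b i = Im (v $ i)" for i
  have ev: "(\<Sum>j<n. complex_of_real (M $$ (i,j)) * v $ j) = k * v $ i" if i: "i < n" for i
  proof -
    have "(Mc *\<^sub>v v) $ i = (\<Sum>j<n. Mc $$ (i,j) * v $ j)" by (rule mult_mat_vec_entry[OF Mc v(1) i])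
    also have "\<dots> = (\<Sum>j<n. complex_of_real (M $$ (i,j)) * v $ j)"
      using M i unfolding Mc_def by (intro sum.cong) auto
    finally show ?thesis using v(3) v(1) i by simp
  qed
  have ma: "mvf n (mf M) a i = Re k * a i - Im k * b i" if i: "i < n" for i
  proof -
    have "Re (\<Sum>j<n. complex_of_real (M $$ (i,j)) * v $ j) = Re (k * v $ i)" using ev[OF i] by simp
    then show ?thesis unfolding mvf_def a_def b_def by (simp add: Re_sum)
  qed
  have mb: "mvf n (mf M) b i = Re k * b i + Im k * a i" if i: "i < n" for i
  proof -
    have "Im (\<Sum>j<n. complex_of_real (M $$ (i,j)) * v $ j) = Im (k * v $ i)" using ev[OF i] by simp
    then show ?thesis unfolding mvf_def a_def b_def by (simp add: Im_sum algebra_simps)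
  qed
  have ea: "ipf n (mvf n (mf M) a) (mvf n (mf P) a) = Re k * qff n (mf P) a - Im k * ipf n b (mvf n (mf P) a)"
  proof -
    have "ipf n (mvf n (mf M) a) (mvf n (mf P) a) = ipf n (\<lambda>i. Re k * a i + (- Im k) * b i) (mvf n (mf P) a)"
      using ma by (intro ipf_cong) auto
    also have "\<dots> = ipf n (\<lambda>i. Re k * a i) (mvf n (mf P) a) + (- Im k) * ipf n b (mvf n (mf P) a)"
      by (rule ipf_lin)
    finally show ?thesis unfolding qff_def by (simp add: ipf_scale)
  qed
  have eb: "ipf n (mvf n (mf M) b) (mvf n (mf P) b) = Re k * qff n (mf P) b + Im k * ipf n a (mvf n (mf P) b)"
  proof -
    have "ipf n (mvf n (mf M) b) (mvf n (mf P) b) = ipf n (\<lambda>i. Re k * b i + (Im k) * a i) (mvf n (mf P) b)"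
      using mb by (intro ipf_cong) auto
    also have "\<dots> = ipf n (\<lambda>i. Re k * b i) (mvf n (mf P) b) + (Im k) * ipf n a (mvf n (mf P) b)"
      by (rule ipf_lin)
    finally show ?thesis unfolding qff_def by (simp add: ipf_scale)
  qed
  have sab: "ipf n b (mvf n (mf P) a) = ipf n a (mvf n (mf P) b)"
    using ipf_mvf_sym[of n "mf P" b a] sym by simp
  have "qff n (mf Q) a + qff n (mf Q) b = 2 * Re k * (qff n (mf P) a + qff n (mf P) b)"
    using LM(3)[of a] LM(3)[of b] ea eb sab by (simp add: algebra_simps)
  also have "\<dots> \<ge> 0" using k(2) psd[of a] psd[of b] by simp
  finally have q0: "0 \<le> qff n (mf Q) a + qff n (mf Q) b" .
  have pos: "ipf n a a + ipf n b b > 0"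
  proof (rule ccontr)
    assume "\<not> ?thesis"
    then have "ipf n a a = 0" "ipf n b b = 0" using ipf_nonneg[of n a] ipf_nonneg[of n b] by linarith+
    then have "\<forall>i<n. a i = 0 \<and> b i = 0" using ipf_zero by blast
    then have "v = 0\<^sub>v n" using v(1) unfolding a_def b_def by (intro eq_vecI) (auto simp: complex_eq_iff)
    with v(2) show False by simp
  qed
  have "0 \<le> \<mu> * (ipf n a a + ipf n b b)"
    using q0 mu(2)[rule_format, of a] mu(2)[rule_format, of b] by (simp add: algebra_simps)
  then have "\<mu> \<ge> 0" using pos by (simp add: zero_le_mult_iff)
  then show ?thesis using mu(1) unfolding Q_def by simp
qed

lemma re_cnj_mult_le: "Re (cnj x * y) \<le> cmod x * cmod y"
  by (metis abs_Re_le_cmod abs_le_iff complex_mod_cnj norm_mult)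

lemma re_cnj_real: "Re (cnj w * complex_of_real r) = Re w * r"
  by simp

lemma re_real_mult: "Re (w * complex_of_real r) = Re w * r"
  by simp

lemma lyap_est:
  fixes U :: "nat \<Rightarrow> nat \<Rightarrow> complex" and u :: "nat \<Rightarrow> complex"
  assumes low: "\<forall>i<n. \<forall>j<i. U i j = 0" and dg: "\<forall>i<n. Re (U i i) \<le> - a"
    and up: "\<forall>i<n. \<forall>j<n. i < j \<longrightarrow> cmod (U i j) \<le> \<delta>" and d0: "\<delta> \<ge> 0"
    and dn: "\<delta> * n \<le> a / 2"
  shows "Re (\<Sum>i<n. cnj (\<Sum>j<n. U i j * u j) * u i) \<le> - (a / 2) * (\<Sum>i<n. (cmod (u i))^2)"
proof -
  define S where "S = (\<Sum>i<n. (cmod (u i))^2)"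
  have S0: "S \<ge> 0" unfolding S_def by (intro sum_nonneg) auto
  define b where "b i j = (if i = j then - a * (cmod (u i))^2 else 0) + \<delta> * ((cmod (u i))^2 + (cmod (u j))^2) / 2" for i j
  have "Re (\<Sum>i<n. cnj (\<Sum>j<n. U i j * u j) * u i) = (\<Sum>i<n. \<Sum>j<n. Re (cnj (U i j * u j) * u i))"
    by (simp add: Re_sum sum_distrib_right cnj_sum)
  also have "\<dots> \<le> (\<Sum>i<n. \<Sum>j<n. b i j)"
  proof (intro sum_mono)
    fix i j assume "i \<in> {..<n}" "j \<in> {..<n}"
    then have i: "i < n" and j: "j < n" by auto
    have dnn: "0 \<le> \<delta> * ((cmod (u i))^2 + (cmod (u j))^2) / 2" using d0 by simp
    consider "i = j" | "j < i" | "i < j" by linarith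
    then show "Re (cnj (U i j * u j) * u i) \<le> b i j"
    proof cases
      case 1
      have "cnj (U i i * u i) * u i = cnj (U i i) * (u i * cnj (u i))"
        by (simp add: mult_ac)
      also have "u i * cnj (u i) = complex_of_real ((cmod (u i))^2)"
        by (rule complex_norm_square[symmetric])
      finally have "cnj (U i i * u i) * u i = cnj (U i i) * complex_of_real ((cmod (u i))^2)" .
      then have "Re (cnj (U i i * u i) * u i) = Re (U i i) * (cmod (u i))^2"
        by (simp only: re_cnj_real)
      also have "\<dots> \<le> - a * (cmod (u i))^2" using dg i by (intro mult_right_mono) auto
      finally show ?thesis using 1 dnn unfolding b_def by simp
    next
      case 2
      then show ?thesis using low i dnn unfolding b_def by simp
    next
      case 3
      have "Re (cnj (U i j * u j) * u i) \<le> cmod (U i j * u j) * cmod (u i)"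
        by (rule re_cnj_mult_le)
      also have "\<dots> = cmod (U i j) * (cmod (u j) * cmod (u i))" by (simp add: norm_mult)
      also have "\<dots> \<le> \<delta> * (cmod (u j) * cmod (u i))"
        using up i j 3 by (intro mult_right_mono) auto
      also have "\<dots> \<le> \<delta> * (((cmod (u i))^2 + (cmod (u j))^2) / 2)"
      proof (intro mult_left_mono d0)
        have "0 \<le> (cmod (u i) - cmod (u j))^2" by simp
        then show "cmod (u j) * cmod (u i) \<le> ((cmod (u i))^2 + (cmod (u j))^2) / 2"
          by (simp add: power2_eq_square algebra_simps)
      qed
      finally show ?thesis using 3 unfolding b_def by simp
    qed
  qed
  also have "\<dots> = - a * S + \<delta> * n * S"
  proof -
    have s1: "(\<Sum>i<n. \<Sum>j<n. (if i = j then - a * (cmod (u i))^2 else 0)) = - a * S"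
      unfolding S_def by (simp add: sum_distrib_left)
    have t1: "(\<Sum>i<n. \<Sum>j<n. (cmod (u i))^2) = n * S" unfolding S_def
      by (simp add: sum_distrib_left)
    have t2: "(\<Sum>i<n. \<Sum>j<n. (cmod (u j))^2) = n * S" unfolding S_def
      by simp
    have "(\<Sum>i<n. \<Sum>j<n. \<delta> * ((cmod (u i))^2 + (cmod (u j))^2) / 2)
        = (\<Sum>i<n. \<Sum>j<n. (\<delta> / 2) * ((cmod (u i))^2 + (cmod (u j))^2))"
      by (intro sum.cong refl) simp
    also have "\<dots> = (\<delta> / 2) * (\<Sum>i<n. \<Sum>j<n. ((cmod (u i))^2 + (cmod (u j))^2))"
      by (simp only: sum_distrib_left)
    also have "\<dots> =
       (\<delta> / 2) * ((\<Sum>i<n. \<Sum>j<n. (cmod (u i))^2) + (\<Sum>i<n. \<Sum>j<n. (cmod (u j))^2))"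
      by (simp only: sum.distrib)
    also have "\<dots> = \<delta> * n * S" unfolding t1 t2 by simp
    finally have s2: "(\<Sum>i<n. \<Sum>j<n. \<delta> * ((cmod (u i))^2 + (cmod (u j))^2) / 2) = \<delta> * n * S" .
    have "(\<Sum>i<n. \<Sum>j<n. b i j) = (\<Sum>i<n. \<Sum>j<n. (if i = j then - a * (cmod (u i))^2 else 0))
       + (\<Sum>i<n. \<Sum>j<n. \<delta> * ((cmod (u i))^2 + (cmod (u j))^2) / 2)"
      unfolding b_def by (simp only: sum.distrib)
    then show ?thesis using s1 s2 by linarith
  qed
  also have "\<dots> \<le> - (a / 2) * S"
  proof -
    have "\<delta> * n * S \<le> (a / 2) * S" using dn S0 by (intro mult_right_mono) auto
    then show ?thesis by simp
  qed
  finally show ?thesis unfolding S_def .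
qed

lemma G_form:
  fixes s :: "nat \<Rightarrow> nat \<Rightarrow> complex" and p q :: "nat \<Rightarrow> real"
  shows "ipf n p (mvf n (\<lambda>k l. Re (\<Sum>i<n. cnj (s i k) * s i l)) q) =
    Re (\<Sum>i<n. cnj (\<Sum>k<n. s i k * complex_of_real (p k)) * (\<Sum>l<n. s i l * complex_of_real (q l)))"
proof -
  define c where "c i k l = Re (cnj (s i k) * s i l)" for i k l
  have "ipf n p (mvf n (\<lambda>k l. Re (\<Sum>i<n. cnj (s i k) * s i l)) q)
     = (\<Sum>k<n. p k * (\<Sum>l<n. (\<Sum>i<n. c i k l) * q l))"
    unfolding ipf_def mvf_def c_def by (simp only: Re_sum)
  also have "\<dots> = (\<Sum>k<n. \<Sum>l<n. \<Sum>i<n. p k * c i k l * q l)"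
    by (simp add: sum_distrib_left sum_distrib_right mult_ac)
  also have "\<dots> = (\<Sum>k<n. \<Sum>i<n. \<Sum>l<n. p k * c i k l * q l)"
    by (intro sum.cong refl sum.swap)
  also have "\<dots> = (\<Sum>i<n. \<Sum>k<n. \<Sum>l<n. p k * c i k l * q l)"
    by (rule sum.swap)
  also have "\<dots> = Re (\<Sum>i<n. cnj (\<Sum>k<n. s i k * complex_of_real (p k)) * (\<Sum>l<n. s i l * complex_of_real (q l)))"
  proof -
    have "cnj (\<Sum>k<n. s i k * complex_of_real (p k)) * (\<Sum>l<n. s i l * complex_of_real (q l))
      = (\<Sum>k<n. \<Sum>l<n. (cnj (s i k) * s i l) * complex_of_real (p k * q l))" for i
    proof -
      have "cnj (\<Sum>k<n. s i k * complex_of_real (p k)) * (\<Sum>l<n. s i l * complex_of_real (q l))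
        = (\<Sum>l<n. \<Sum>k<n. (cnj (s i k) * s i l) * complex_of_real (p k * q l))"
        by (simp add: cnj_sum sum_product mult_ac)
      also have "\<dots> = (\<Sum>k<n. \<Sum>l<n. (cnj (s i k) * s i l) * complex_of_real (p k * q l))"
        by (rule sum.swap)
      finally show ?thesis .
    qed
    then have "Re (\<Sum>i<n. cnj (\<Sum>k<n. s i k * complex_of_real (p k)) * (\<Sum>l<n. s i l * complex_of_real (q l)))
      = (\<Sum>i<n. \<Sum>k<n. \<Sum>l<n. Re ((cnj (s i k) * s i l) * complex_of_real (p k * q l)))"
      by (simp only: Re_sum)
    also have "\<dots> = (\<Sum>i<n. \<Sum>k<n. \<Sum>l<n. p k * c i k l * q l)"
      unfolding c_def re_real_mult by (intro sum.cong refl) (simp add: mult_ac)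
    finally show ?thesis by simp
  qed
  finally show ?thesis .
qed

lemma poly_lin_prod_root: "x \<in> set es \<Longrightarrow> poly (\<Prod>a\<leftarrow>es. [:- a, 1:]) (x::complex) = 0"
  by (induction es) auto

lemma mvf_mat_cong:
  assumes "\<forall>i<n. \<forall>j<n. Q i j = Q' i j"
  shows "ipf n p (mvf n Q q) = ipf n p (mvf n Q' q)"
  using assms unfolding ipf_def mvf_def by (intro sum.cong refl) auto

lemma lyap_exists:
  fixes M :: "real mat"
  assumes M: "M \<in> carrier_mat n n" and n: "0 < n" and st: "stable M"
  shows "\<exists>P0. P0 \<in> carrier_mat n n \<and> (\<forall>i<n. \<forall>j<n. P0 $$ (i,j) = P0 $$ (j,i)) \<and>
    (\<forall>f. 0 \<le> qff n (mf P0) f) \<and>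
    (\<forall>y. ipf n y y > 0 \<longrightarrow> ipf n (mvf n (mf M) y) (mvf n (mf P0) y) < 0)"
proof -
  define Mc where "Mc = map_mat complex_of_real M"
  have Mc: "Mc \<in> carrier_mat n n" using M unfolding Mc_def by simp
  obtain es where es: "char_poly Mc = (\<Prod>a\<leftarrow>es. [:- a, 1:])"
    using char_poly_factorized[OF Mc] by blast
  obtain T S Si where sd: "schur_decomposition Mc es = (T,S,Si)"
    by (metis prod_cases3)
  from schur_decomposition[OF Mc es sd] have sim: "similar_mat_wit Mc T S Si"
    and ut: "upper_triangular T" and dg: "diag_mat T = es" by auto
  note W = similar_mat_witD2[OF Mc sim]
  have T: "T \<in> carrier_mat n n" and S: "S \<in> carrier_mat n n" and Si: "Si \<in> carrier_mat n n"
    using W by auto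
  have SiM: "Si * Mc = T * Si"
  proof -
    have "Si * Mc = Si * (S * (T * Si))" using W(3) assoc_mult_mat[OF S T Si] by simp
    also have "\<dots> = (Si * S) * (T * Si)"
      using assoc_mult_mat[OF Si S mult_carrier_mat[OF T Si]] by simp
    also have "\<dots> = T * Si" using W(2) T Si by simp
    finally show ?thesis .
  qed
  have dneg: "Re (T $$ (i,i)) < 0" if i: "i < n" for i
  proof -
    have "T $$ (i,i) \<in> set es" using dg i T unfolding diag_mat_def by auto
    then have "poly (char_poly Mc) (T $$ (i,i)) = 0" using es poly_lin_prod_root by simp
    then have "eigenvalue Mc (T $$ (i,i))" using eigenvalue_root_char_poly[OF Mc] by simp
    then show ?thesis using st unfolding stable_def Mc_def by blast
  qed
  define a where "a = Min ((\<lambda>i. - Re (T $$ (i,i))) ` {..<n})"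
  have fin: "finite ((\<lambda>i. - Re (T $$ (i,i))) ` {..<n})" by simp
  have ne: "(\<lambda>i. - Re (T $$ (i,i))) ` {..<n} \<noteq> {}" using n by auto
  have a0: "a > 0" unfolding a_def using Min_gr_iff[OF fin ne] dneg by auto
  have ale: "Re (T $$ (i,i)) \<le> - a" if "i < n" for i
  proof -
    have "a \<le> - Re (T $$ (i,i))" unfolding a_def using that fin by (intro Min_le) auto
    then show ?thesis by simp
  qed
  define C where "C = (\<Sum>i<n. \<Sum>j<n. cmod (T $$ (i,j))) + 1"
  have Cle: "cmod (T $$ (i,j)) \<le> C" if "i < n" "j < n" for i j
  proof -
    have "cmod (T $$ (i,j)) \<le> (\<Sum>j<n. cmod (T $$ (i,j)))"
      using that by (intro member_le_sum) auto
    also have "\<dots> \<le> (\<Sum>i<n. \<Sum>j<n. cmod (T $$ (i,j)))"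
      using that by (intro member_le_sum[of i "{..<n}" "\<lambda>i. \<Sum>j<n. cmod (T $$ (i,j))"]) (auto intro: sum_nonneg)
    finally show ?thesis unfolding C_def by simp
  qed
  have C0: "C > 0" unfolding C_def by (smt (verit) norm_ge_zero sum_nonneg)
  define \<epsilon> where "\<epsilon> = min 1 (a / (2 * C * n))"
  have e0: "\<epsilon> > 0" unfolding \<epsilon>_def using a0 C0 n by simp
  have e1: "\<epsilon> \<le> 1" unfolding \<epsilon>_def by simp
  have eCn: "\<epsilon> * C * n \<le> a / 2"
  proof -
    have "\<epsilon> \<le> a / (2 * C * n)" unfolding \<epsilon>_def by simp
    then have "\<epsilon> * (C * n) \<le> a / (2 * C * n) * (C * n)" using C0 n by (intro mult_right_mono) auto
    also have "\<dots> = a / 2" using C0 n by (simp add: field_simps)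
    finally show ?thesis by (simp add: mult.assoc)
  qed
  define sp where "sp i k = Si $$ (i,k) / complex_of_real (\<epsilon> ^ i)" for i k
  define U where "U i j = T $$ (i,j) * complex_of_real (\<epsilon> ^ j / \<epsilon> ^ i)" for i j
  define Pf where "Pf k l = Re (\<Sum>i<n. cnj (sp i k) * sp i l)" for k l
  define P0 where "P0 = mat n n (\<lambda>(k,l). Pf k l)"
  have P0: "P0 \<in> carrier_mat n n" unfolding P0_def by simp
  have P0e: "\<forall>i<n. \<forall>j<n. mf P0 i j = Pf i j" unfolding P0_def by simp
  have Pfsym: "Pf k l = Pf l k" for k l
    unfolding Pf_def Re_sum by (intro sum.cong refl) simp
  define u where "u y i = (\<Sum>k<n. sp i k * complex_of_real (y k))" for y i
  have Gf: "ipf n p (mvf n (mf P0) q) = Re (\<Sum>i<n. cnj (u p i) * u q i)" for p q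
    using mvf_mat_cong[OF P0e] G_form[of n p sp q] unfolding u_def Pf_def by simp
  have psd: "0 \<le> qff n (mf P0) f" for f
    unfolding qff_def Gf Re_sum by (intro sum_nonneg) simp
  have key: "(\<Sum>k<n. sp i k * complex_of_real (mvf n (mf M) y k)) = (\<Sum>j<n. U i j * u y j)"
    if i: "i < n" for i y
  proof -
    define w where "w j = (\<Sum>l<n. Si $$ (j,l) * complex_of_real (y l))" for j
    have ent: "(\<Sum>k<n. Si $$ (i,k) * complex_of_real (M $$ (k,l))) = (\<Sum>j<n. T $$ (i,j) * Si $$ (j,l))"
      if l: "l < n" for l
    proof -
      have "(Si * Mc) $$ (i,l) = (\<Sum>k<n. Si $$ (i,k) * Mc $$ (k,l))" by (rule mult_mat_entry[OF Si Mc i l])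
      also have "\<dots> = (\<Sum>k<n. Si $$ (i,k) * complex_of_real (M $$ (k,l)))"
        using M l unfolding Mc_def by (intro sum.cong) auto
      finally have "(Si * Mc) $$ (i,l) = (\<Sum>k<n. Si $$ (i,k) * complex_of_real (M $$ (k,l)))" .
      moreover have "(T * Si) $$ (i,l) = (\<Sum>j<n. T $$ (i,j) * Si $$ (j,l))" by (rule mult_mat_entry[OF T Si i l])
      ultimately show ?thesis using SiM by simp
    qed
    have "(\<Sum>k<n. Si $$ (i,k) * complex_of_real (mvf n (mf M) y k))
        = (\<Sum>k<n. \<Sum>l<n. Si $$ (i,k) * complex_of_real (M $$ (k,l)) * complex_of_real (y l))"
      unfolding mvf_def by (simp add: sum_distrib_left mult_ac)
    also have "\<dots> = (\<Sum>l<n. \<Sum>k<n. Si $$ (i,k) * complex_of_real (M $$ (k,l)) * complex_of_real (y l))"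
      by (rule sum.swap)
    also have "\<dots> = (\<Sum>l<n. (\<Sum>j<n. T $$ (i,j) * Si $$ (j,l)) * complex_of_real (y l))"
    proof (intro sum.cong refl)
      fix l assume "l \<in> {..<n}"
      then have l: "l < n" by simp
      have "(\<Sum>k<n. Si $$ (i,k) * complex_of_real (M $$ (k,l)) * complex_of_real (y l))
          = (\<Sum>k<n. Si $$ (i,k) * complex_of_real (M $$ (k,l))) * complex_of_real (y l)"
        by (simp add: sum_distrib_right)
      also have "\<dots> = (\<Sum>j<n. T $$ (i,j) * Si $$ (j,l)) * complex_of_real (y l)"
        using ent[OF l] by simp
      finally show "(\<Sum>k<n. Si $$ (i,k) * complex_of_real (M $$ (k,l)) * complex_of_real (y l))
          = (\<Sum>j<n. T $$ (i,j) * Si $$ (j,l)) * complex_of_real (y l)" .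
    qed
    also have "\<dots> = (\<Sum>l<n. \<Sum>j<n. T $$ (i,j) * Si $$ (j,l) * complex_of_real (y l))"
      by (simp add: sum_distrib_right)
    also have "\<dots> = (\<Sum>j<n. \<Sum>l<n. T $$ (i,j) * Si $$ (j,l) * complex_of_real (y l))"
      by (rule sum.swap)
    also have "\<dots> = (\<Sum>j<n. T $$ (i,j) * w j)"
      unfolding w_def by (simp add: sum_distrib_left mult_ac)
    finally have A: "(\<Sum>k<n. Si $$ (i,k) * complex_of_real (mvf n (mf M) y k)) = (\<Sum>j<n. T $$ (i,j) * w j)" .
    have uw: "u y j = w j / complex_of_real (\<epsilon> ^ j)" for j
      unfolding u_def w_def sp_def by (simp add: sum_divide_distrib)
    have "(\<Sum>k<n. sp i k * complex_of_real (mvf n (mf M) y k))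
        = (\<Sum>k<n. Si $$ (i,k) * complex_of_real (mvf n (mf M) y k)) / complex_of_real (\<epsilon> ^ i)"
      unfolding sp_def by (simp add: sum_divide_distrib)
    also have "\<dots> = (\<Sum>j<n. T $$ (i,j) * w j / complex_of_real (\<epsilon> ^ i))"
      unfolding A by (simp add: sum_divide_distrib)
    also have "\<dots> = (\<Sum>j<n. U i j * u y j)"
    proof (intro sum.cong refl)
      fix j
      have "\<epsilon> ^ j \<noteq> 0" using e0 by simp
      then show "T $$ (i,j) * w j / complex_of_real (\<epsilon> ^ i) = U i j * u y j"
        unfolding U_def uw using e0 by (simp add: field_simps)
    qed
    finally show ?thesis .
  qed
  have neg: "ipf n (mvf n (mf M) y) (mvf n (mf P0) y) < 0" if y: "ipf n y y > 0" for y
  proof -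
    have "ipf n (mvf n (mf M) y) (mvf n (mf P0) y) = Re (\<Sum>i<n. cnj (\<Sum>j<n. U i j * u y j) * u y i)"
      unfolding Gf u_def[of "mvf n (mf M) y"] using key by simp
    also have "\<dots> \<le> - (a / 2) * (\<Sum>i<n. (cmod (u y i))^2)"
    proof (rule lyap_est)
      show "\<forall>i<n. \<forall>j<i. U i j = 0" using ut T unfolding U_def upper_triangular_def by auto
      show "\<forall>i<n. Re (U i i) \<le> - a" using ale e0 unfolding U_def by simp
      show "0 \<le> \<epsilon> * C" using e0 C0 by simp
      show "\<epsilon> * C * real n \<le> a / 2" by (rule eCn)
      show "\<forall>i<n. \<forall>j<n. i < j \<longrightarrow> cmod (U i j) \<le> \<epsilon> * C"
      proof (intro allI impI)
        fix i j assume ij: "i < n" "j < n" "i < j"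
        have pd: "\<epsilon> ^ j / \<epsilon> ^ i = \<epsilon> ^ (j - i)" using e0 ij by (simp add: power_diff)
        have "\<epsilon> ^ (j - i) \<le> \<epsilon> ^ 1" using e0 e1 ij by (intro power_decreasing) auto
        then have pe: "\<epsilon> ^ j / \<epsilon> ^ i \<le> \<epsilon>" using pd by simp
        have "cmod (U i j) = cmod (T $$ (i,j)) * (\<epsilon> ^ j / \<epsilon> ^ i)"
        proof -
          have "\<bar>\<epsilon> ^ j / \<epsilon> ^ i\<bar> = \<epsilon> ^ j / \<epsilon> ^ i" using e0 by simp
          then show ?thesis unfolding U_def by (simp only: norm_mult norm_of_real)
        qed
        also have "\<dots> \<le> C * \<epsilon>" using Cle[OF ij(1,2)] pe e0 C0
          by (intro mult_mono) auto
        finally show "cmod (U i j) \<le> \<epsilon> * C" by (simp add: mult.commute)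
      qed
    qed
    also have "\<dots> < 0"
    proof -
      have "(\<Sum>i<n. (cmod (u y i))^2) > 0"
      proof (rule ccontr)
        assume "\<not> ?thesis"
        then have "(\<Sum>i<n. (cmod (u y i))^2) = 0"
          using sum_nonneg[of "{..<n}" "\<lambda>i. (cmod (u y i))^2"] by simp
        then have u0: "\<forall>i<n. u y i = 0" using sum_nonneg_eq_0_iff[of "{..<n}" "\<lambda>i. (cmod (u y i))^2"] by simp
        have "y k = 0" if k: "k < n" for k
        proof -
          have w0: "(\<Sum>l<n. Si $$ (i,l) * complex_of_real (y l)) = 0" if "i < n" for i
          proof -
            have "(\<Sum>l<n. Si $$ (i,l) * complex_of_real (y l)) = u y i * complex_of_real (\<epsilon> ^ i)"
              unfolding u_def sp_def using e0 by (simp add: sum_distrib_right)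
            then show ?thesis using u0 that by simp
          qed
          have "complex_of_real (y k) = (\<Sum>l<n. (S * Si) $$ (k,l) * complex_of_real (y l))"
          proof -
            have "(\<Sum>l<n. (S * Si) $$ (k,l) * complex_of_real (y l)) = (\<Sum>l<n. (if k = l then complex_of_real (y l) else 0))"
              using W(1) k by (intro sum.cong) auto
            also have "\<dots> = complex_of_real (y k)" using k by simp
            finally show ?thesis by simp
          qed
          also have "\<dots> = (\<Sum>l<n. \<Sum>i<n. S $$ (k,i) * Si $$ (i,l) * complex_of_real (y l))"
            using mult_mat_entry[OF S Si k] by (simp add: sum_distrib_right)
          also have "\<dots> = (\<Sum>i<n. \<Sum>l<n. S $$ (k,i) * Si $$ (i,l) * complex_of_real (y l))"
            by (rule sum.swap)
          also have "\<dots> = (\<Sum>i<n. S $$ (k,i) * (\<Sum>l<n. Si $$ (i,l) * complex_of_real (y l)))"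
            by (simp add: sum_distrib_left mult_ac)
          also have "\<dots> = 0" using w0 by simp
          finally show ?thesis by simp
        qed
        then have "ipf n y y = 0" unfolding ipf_def by simp
        with y show False by simp
      qed
      then show ?thesis using a0 by (simp add: mult_pos_pos)
    qed
    finally show ?thesis .
  qed
  show ?thesis
    using P0 P0e Pfsym psd neg by (intro exI[of _ P0]) auto
qed

lemma stable_inf:
  fixes M :: "real mat"
  assumes M: "M \<in> carrier_mat n n" and n: "0 < n" and st: "stable M"
  shows "(INF P \<in> psd_set n. ereal (lambda_max (transpose_mat M * P + P * M))) = -\<infinity>"
proof -
  obtain P0 where P0: "P0 \<in> carrier_mat n n" and sym: "\<forall>i<n. \<forall>j<n. P0 $$ (i,j) = P0 $$ (j,i)"
    and psd: "\<forall>f. 0 \<le> qff n (mf P0) f"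
    and neg: "\<forall>y. ipf n y y > 0 \<longrightarrow> ipf n (mvf n (mf M) y) (mvf n (mf P0) y) < 0"
    using lyap_exists[OF M n st] by blast
  define Q0 where "Q0 = transpose_mat M * P0 + P0 * M"
  note L0 = lyap_mat[OF M P0 sym, folded Q0_def]
  obtain \<mu>0 where mu0: "\<forall>y. qff n (mf Q0) y \<le> \<mu>0 * ipf n y y" "\<exists>x. ipf n x x = 1 \<and> qff n (mf Q0) x = \<mu>0"
    using lmax[OF L0(1) L0(2) n] by blast
  have m0: "\<mu>0 < 0"
  proof -
    obtain x where x: "ipf n x x = 1" "qff n (mf Q0) x = \<mu>0" using mu0(2) by blast
    have "qff n (mf Q0) x = 2 * ipf n (mvf n (mf M) x) (mvf n (mf P0) x)" by (rule L0(3))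
    also have "\<dots> < 0" using neg x(1) by simp
    finally show ?thesis using x(2) by simp
  qed
  show ?thesis
  proof (rule ereal_bot)
    fix B :: real
    define t where "t = (\<bar>B\<bar> + 1) / (- \<mu>0)"
    have t0: "t > 0" unfolding t_def using m0 by (intro divide_pos_pos) auto
    have tm: "t * \<mu>0 = - (\<bar>B\<bar> + 1)" unfolding t_def using m0 by (simp add: field_simps)
    define P where "P = t \<cdot>\<^sub>m P0"
    have Pc: "P \<in> carrier_mat n n" unfolding P_def using P0 by simp
    have Pe: "\<forall>i<n. \<forall>j<n. P $$ (i,j) = t * P0 $$ (i,j)" unfolding P_def using P0 by simp
    have Psym: "\<forall>i<n. \<forall>j<n. P $$ (i,j) = P $$ (j,i)" using Pe sym by simp
    have mvP: "ipf n p (mvf n (mf P) q) = t * ipf n p (mvf n (mf P0) q)" for p q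
    proof -
      have "ipf n p (mvf n (mf P) q) = ipf n p (mvf n (\<lambda>i j. t * P0 $$ (i,j)) q)"
        using Pe by (intro mvf_mat_cong) auto
      also have "\<dots> = t * ipf n p (mvf n (mf P0) q)"
        unfolding ipf_def mvf_def by (simp add: sum_distrib_left mult_ac)
      finally show ?thesis .
    qed
    have Ppsd: "P \<in> psd_set n"
      unfolding psd_set_iff using Pc Psym psd t0 by (auto simp: qff_def mvP)
    define Q where "Q = transpose_mat M * P + P * M"
    note L = lyap_mat[OF M Pc Psym, folded Q_def]
    obtain \<mu> where mu: "lambda_max Q = \<mu>" "\<exists>x. ipf n x x = 1 \<and> qff n (mf Q) x = \<mu>"
      using lmax[OF L(1) L(2) n] by blast
    obtain x where x: "ipf n x x = 1" "qff n (mf Q) x = \<mu>" using mu(2) by blast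
    have "\<mu> = t * qff n (mf Q0) x" using x(2) L(3)[of x] L0(3)[of x] mvP by simp
    also have "\<dots> \<le> t * (\<mu>0 * ipf n x x)" using mu0(1) t0 by (intro mult_left_mono) auto
    also have "\<dots> = - (\<bar>B\<bar> + 1)" using x(1) tm by simp
    finally have "\<mu> \<le> B" by linarith
    then have "ereal (lambda_max Q) \<le> ereal B" using mu(1) by simp
    then show "(INF P \<in> psd_set n. ereal (lambda_max (transpose_mat M * P + P * M))) \<le> ereal B"
      using Ppsd unfolding Q_def by (intro INF_lower2) auto
  qed
qed

lemma unstable_inf:
  fixes M :: "real mat"
  assumes M: "M \<in> carrier_mat n n" and n: "0 < n" and ns: "\<not> stable M"
  shows "(INF P \<in> psd_set n. ereal (lambda_max (transpose_mat M * P + P * M))) \<ge> 0"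
  using unstable_ge0[OF M n ns] by (intro INF_greatest) auto

lemma attack_fin: "finite (attack_space N)"
proof -
  let ?F = "\<lambda>X. mat N N (\<lambda>(i,j). if (i,j) \<in> X then 1 else (0::real))"
  have "attack_space N \<subseteq> ?F ` Pow ({..<N} \<times> {..<N})"
  proof
    fix \<alpha> assume a: "\<alpha> \<in> attack_space N"
    define X where "X = {(i,j). i < N \<and> j < N \<and> \<alpha> $$ (i,j) = 1}"
    have "\<alpha> = ?F X"
    proof (rule eq_matI)
      fix i j assume "i < dim_row (?F X)" "j < dim_col (?F X)"
      then have ij: "i < N" "j < N" by auto
      have "\<alpha> $$ (i,j) = 0 \<or> \<alpha> $$ (i,j) = 1" using a ij unfolding attack_space_def by auto
      then show "\<alpha> $$ (i,j) = ?F X $$ (i,j)" using ij unfolding X_def by auto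
    qed (use a in \<open>auto simp: attack_space_def\<close>)
    moreover have "X \<in> Pow ({..<N} \<times> {..<N})" unfolding X_def by auto
    ultimately show "\<alpha> \<in> ?F ` Pow ({..<N} \<times> {..<N})" by blast
  qed
  then show ?thesis by (rule finite_subset) auto
qed

lemma attack_ne: "1\<^sub>m N \<in> attack_space N"
  unfolding attack_space_def by auto

theorem theorem1:
  fixes N :: nat and ns ms :: "nat \<Rightarrow> nat" and A B K :: "real mat"
  assumes "N \<ge> 1"
    and "\<forall>i < N. ns i \<ge> 1"
    and "A \<in> carrier_mat (\<Sum>i<N. ns i) (\<Sum>i<N. ns i)"
    and "block_diag N ns ms B"
    and "K \<in> carrier_mat (\<Sum>i<N. ms i) (\<Sum>i<N. ns i)"
  shows "(resilient N ns ms A B K \<longleftrightarrow> gamma_L0 N ns ms A B K = -\<infinity>) \<and>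
         (\<not> resilient N ns ms A B K \<longleftrightarrow> gamma_L0 N ns ms A B K \<ge> 0)"
proof -
  define n where "n = (\<Sum>i<N. ns i)"
  define m where "m = (\<Sum>i<N. ms i)"
  have n: "0 < n"
  proof -
    have "ns 0 \<le> n" unfolding n_def using assms(1) by (intro member_le_sum) auto
    then show ?thesis using assms(1,2) by (metis le_trans less_one not_le zero_less_iff_neq_zero)
  qed
  have Ac: "A \<in> carrier_mat n n" using assms(3) unfolding n_def .
  have Bc: "B \<in> carrier_mat n m" using assms(4) unfolding block_diag_def n_def m_def by auto
  have Kc: "K \<in> carrier_mat m n" using assms(5) unfolding n_def m_def .
  have Mc: "A_alpha ns ms A B K \<alpha> \<in> carrier_mat n n" for \<alpha>
  proof -
    have "blk_scale ns ms K \<alpha> \<in> carrier_mat m n" using Kc unfolding blk_scale_def by auto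
    then show ?thesis unfolding A_alpha_def using Ac Bc by auto
  qed
  define g where "g \<alpha> = (INF P \<in> psd_set n. ereal (lambda_max (transpose_mat (A_alpha ns ms A B K \<alpha>) * P + P * A_alpha ns ms A B K \<alpha>)))" for \<alpha>
  have gam: "gamma_L0 N ns ms A B K = Max (g ` attack_space N)"
    unfolding gamma_L0_def g_def n_def by simp
  have fin: "finite (g ` attack_space N)" using attack_fin by simp
  have ne: "g ` attack_space N \<noteq> {}" using attack_ne by blast
  have R1: "gamma_L0 N ns ms A B K = -\<infinity>" if r: "resilient N ns ms A B K"
  proof -
    have "\<forall>\<alpha>\<in>attack_space N. g \<alpha> = -\<infinity>"
      using r stable_inf[OF Mc n] unfolding resilient_def g_def by blast
    then have "g ` attack_space N = {-\<infinity>}" using ne by auto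
    then show ?thesis using gam by simp
  qed
  have R2: "gamma_L0 N ns ms A B K \<ge> 0" if r: "\<not> resilient N ns ms A B K"
  proof -
    obtain \<alpha> where a: "\<alpha> \<in> attack_space N" "\<not> stable (A_alpha ns ms A B K \<alpha>)"
      using r unfolding resilient_def by blast
    have "0 \<le> g \<alpha>" unfolding g_def by (rule unstable_inf[OF Mc n a(2)])
    also have "\<dots> \<le> Max (g ` attack_space N)" using fin a(1) by (intro Max_ge) auto
    finally show ?thesis using gam by simp
  qed
  show ?thesis using R1 R2 by force
qed

end
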